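(* $\displaystyle\lim_{n\to\infty}\frac{l(4n+2)}{l(4n+1)}=\frac{17}{5}.$
   Context: For $n\ge 0$, $c(n)=\sum_{i=0}^{n}\left(\binom{n}{i}\bmod 2\right)2^{i}$, the integer whose binary digits form the $n$-th row of Pascal's triangle modulo $2$; one has $c(2n)\equiv1\pmod4$, and $l(n)=\frac{c(2n)-1}{4}$. (Stated in the paper as a conjecture of R. Stephan and proved there.) *)

theory Defs
  imports Complex_Main
begin

definition c :: "nat \<Rightarrow> nat" where
  "c n = (\<Sum>i = 0..n. ((n choose i) mod 2) * 2 ^ i)"

text \<open>l n = (c(2n) - 1)/4; since c(2n) = 1 mod 4, the division is exact.\<close>
definition l :: "nat \<Rightarrow> nat" where
  "l n = (c (2 * n) - 1) div 4"

end

theory Submission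
  imports Defs
begin

lemma choose2: "(n + 2 choose (j + 2)) = (n choose (j+2)) + 2 * (n choose (j+1)) + (n choose j)"
  by (simp add: numeral_2_eq_2)

lemma par: "(2*m choose (2*k+1)) mod 2 = 0 \<and> (2*m choose (2*k)) mod 2 = (m choose k) mod 2"
proof (induction m arbitrary: k)
  case 0 then show ?case by (cases k) auto
next
  case (Suc m)
  show ?case
  proof (cases k)
    case 0 then show ?thesis by simp
  next
    case (Suc k')
    have e1: "2 * Suc m = 2*m + 2" by simp
    have a: "(2*Suc m choose (2*k+1)) = (2*m choose (2*k'+1+2)) + 2*(2*m choose (2*k'+2)) + (2*m choose (2*k'+1))"
      using choose2[of "2*m" "2*k'+1"] Suc by (simp add: e1)
    have b: "(2*Suc m choose (2*k)) = (2*m choose (2*k'+2)) + 2*(2*m choose (2*k'+1)) + (2*m choose (2*k'))"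
      using choose2[of "2*m" "2*k'"] Suc by (simp add: e1)
    have h1: "(2*m choose (2*(k'+1)+1)) mod 2 = 0" "(2*m choose (2*k'+1)) mod 2 = 0"
      "(2*m choose (2*(k'+1))) mod 2 = (m choose (k'+1)) mod 2"
      "(2*m choose (2*k')) mod 2 = (m choose k') mod 2" using Suc.IH by blast+
    have s1: "2*(k'+1)+1 = 2*k'+1+2" "2*(k'+1) = 2*k'+2" by simp_all
    have "(2*Suc m choose (2*k+1)) mod 2 = 0" using a h1(1,2) s1 by (simp add: mod_add_eq[symmetric])
    moreover have "(2*Suc m choose (2*k)) mod 2 = (Suc m choose k) mod 2"
    proof -
      have "(Suc m choose k) = (m choose (k'+1)) + (m choose k')" using Suc by simp
      then show ?thesis using b h1(3,4) s1
        by (metis (no_types, lifting) mod_add_eq mod_mult_self4 add.commute)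
    qed
    ultimately show ?thesis by blast
  qed
qed

lemma par_odd: "(2*m+1 choose (2*k+1)) mod 2 = (m choose k) mod 2 \<and> (2*m+1 choose (2*k)) mod 2 = (m choose k) mod 2"
proof
  have "(2*m+1 choose (2*k+1)) = (2*m choose (2*k+1)) + (2*m choose (2*k))" by simp
  then show "(2*m+1 choose (2*k+1)) mod 2 = (m choose k) mod 2" using par[of m k]
    by (metis add_0 mod_add_left_eq mod_mod_trivial)
  show "(2*m+1 choose (2*k)) mod 2 = (m choose k) mod 2"
  proof (cases k)
    case 0 then show ?thesis by simp
  next
    case (Suc k')
    have "(2*m+1 choose (2*k)) = (2*m choose (2*k)) + (2*m choose (2*k'+1))" using Suc by simp
    then show ?thesis using par[of m k] par[of m k'] by (metis add_0_right mod_add_right_eq)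
  qed
qed

definition D :: "nat \<Rightarrow> nat \<Rightarrow> nat \<Rightarrow> nat" where
  "D N m x = (\<Sum>j<N. ((m choose j) mod 2) * x ^ j)"

lemma D_ext: "m < N \<Longrightarrow> D (N + K) m x = D N m x"
  by (induction K) (auto simp: D_def binomial_eq_0)

lemma sum_split2: "(\<Sum>i<2*(N::nat). g i) = (\<Sum>j<N. g (2*j) + g (2*j+1)::nat)"
  by (induction N) auto

lemma pw: "((x::nat)^j)^2 = (x^2)^j"
  by (metis power_mult mult.commute)

lemma D_even: "D (2*N) (2*m) x = D N m (x^2)"
  unfolding D_def sum_split2 using par
  by (intro sum.cong) (auto simp: power_mult)

lemma D_odd: "D (2*N) (2*m+1) x = (1+x) * D N m (x^2)"
  unfolding D_def sum_split2 sum_distrib_left using par_odd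
  by (intro sum.cong) (auto simp: power_mult algebra_simps pw)

lemma D_even': "N2 = 2*N \<Longrightarrow> m2 = 2*m \<Longrightarrow> D N2 m2 x = D N m (x^2)"
  using D_even by simp
lemma D_odd': "N2 = 2*N \<Longrightarrow> m2 = 2*m+1 \<Longrightarrow> D N2 m2 x = (1+x) * D N m (x^2)"
  using D_odd by simp

lemma c_D: "c n = D (n+1) n 2"
  unfolding c_def D_def by (simp add: atLeast0AtMost lessThan_Suc_atMost)

lemma key: "c (8*n+4) = 17 * D (n+1) n 256 \<and> c (8*n+2) = 5 * D (n+1) n 256"
proof -
  have "c (8*n+4) = D (8*n+8) (8*n+4) 2"
    using c_D D_ext[of "8*n+4" "8*n+5" 3 2] by (simp add: algebra_simps)
  also have "\<dots> = D (4*n+4) (4*n+2) 4"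
    using D_even'[of "8*n+8" "4*n+4" "8*n+4" "4*n+2" 2] by simp
  also have "\<dots> = D (2*n+2) (2*n+1) 16"
    using D_even'[of "4*n+4" "2*n+2" "4*n+2" "2*n+1" 4] by simp
  also have "\<dots> = 17 * D (n+1) n 256"
    using D_odd'[of "2*n+2" "n+1" "2*n+1" n 16] by simp
  finally have 1: "c (8*n+4) = 17 * D (n+1) n 256" .
  have "c (8*n+2) = D (8*n+8) (8*n+2) 2"
    using c_D[of "8*n+2"] D_ext[of "8*n+2" "8*n+3" 5 2] by (simp add: numeral_eq_Suc)
  also have "\<dots> = D (4*n+4) (4*n+1) 4"
    using D_even'[of "8*n+8" "4*n+4" "8*n+2" "4*n+1" 2] by simp
  also have "\<dots> = 5 * D (2*n+2) (2*n) 16"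
    using D_odd'[of "4*n+4" "2*n+2" "4*n+1" "2*n" 4] by simp
  also have "\<dots> = 5 * D (n+1) n 256"
    using D_even'[of "2*n+2" "n+1" "2*n" n 16] by simp
  finally show ?thesis using 1 by simp
qed

lemma D_mod: "D (Suc N) m 256 mod 256 = 1"
proof (induction N)
  case 0 then show ?case by (simp add: D_def)
next
  case (Suc N)
  have "D (Suc (Suc N)) m 256 = D (Suc N) m 256 + 256 * (((m choose Suc N) mod 2) * 256 ^ N)"
    by (simp add: D_def)
  then show ?case using Suc by simp
qed

lemma D_ge: "D (Suc n) n x \<ge> x ^ n"
proof -
  have "((n choose n) mod 2) * x ^ n \<le> D (Suc n) n x"
    unfolding D_def by (rule member_le_sum) auto
  then show ?thesis by simp
qed

lemma lt256: "n < (256::nat)^n"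
  by (induction n) auto

definition Q :: "nat \<Rightarrow> nat" where "Q n = D (n+1) n 256 div 256"

lemma C_eq: "D (n+1) n 256 = 256 * Q n + 1"
  using D_mod[of n n] div_mult_mod_eq[of "D (n+1) n 256" 256] unfolding Q_def by simp

lemma l2_eq: "l (4*n+2) = 1088 * Q n + 4"
proof -
  have "2*(4*n+2) = 8*n+4" by simp
  then show ?thesis using key[of n] C_eq[of n] unfolding l_def by (simp only:) simp
qed

lemma l1_eq: "l (4*n+1) = 320 * Q n + 1"
proof -
  have "2*(4*n+1) = 8*n+2" by simp
  then show ?thesis using key[of n] C_eq[of n] unfolding l_def by (simp only:) simp
qed

lemma Q_ge: "n \<le> 320 * Q n"
  using D_ge[where n=n and x=256] C_eq[of n] lt256[of n] by simp

definition G :: "nat \<Rightarrow> real" where "G n = 3 / (5 * (320 * real (Q n) + 1))"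

lemma ratio_eq: "real (l (4 * n + 2)) / real (l (4 * n + 1)) = 17/5 + G n"
  unfolding l1_eq l2_eq G_def by (simp add: field_simps)

lemma G_ge0: "0 \<le> G n" unfolding G_def by simp

lemma G_le: "G n \<le> inverse (real (Suc n))"
proof -
  have "real n \<le> 320 * real (Q n)" using Q_ge[of n] by (metis of_nat_le_iff of_nat_mult of_nat_numeral)
  then show ?thesis unfolding G_def by (simp add: field_simps)
qed

lemma G_lim: "G \<longlonglongrightarrow> 0"
proof (rule real_tendsto_sandwich[OF _ _ tendsto_const LIMSEQ_inverse_real_of_nat])
  show "\<forall>\<^sub>F n in sequentially. 0 \<le> G n" using G_ge0 by simp
  show "\<forall>\<^sub>F n in sequentially. G n \<le> inverse (real (Suc n))" using G_le by simp
qed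

theorem mainTheorem11:
  shows "(\<lambda>n. real (l (4 * n + 2)) / real (l (4 * n + 1))) \<longlonglongrightarrow> 17 / 5"
proof -
  have "(\<lambda>n. 17/5 + G n) \<longlonglongrightarrow> 17/5 + 0" using G_lim by (intro tendsto_add) auto
  then show ?thesis unfolding ratio_eq by simp
qed

end
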